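(* For any simple directed graph $\mathbb G$ with $n\ge 2$ vertices and $m$ arcs, $a(\mathbb G)\le \frac{m}{n-1}$.
   Context: A simple directed graph has no self-arcs and no repeated arcs. The (in-degree) Laplacian of $\mathbb G$ on $\{1,\dots,n\}$ is $L=D-A$, $D$ the diagonal matrix of in-degrees, $A_{ij}=1$ if $(j,i)$ is an arc and $0$ otherwise. $a(\mathbb G)$ is the second smallest real part among the $n$ eigenvalues of $L$ counted with algebraic multiplicity. *)

theory Defs
  imports "Jordan_Normal_Form.Char_Poly" "HOL-Computational_Algebra.Fundamental_Theorem_Algebra"
begin

text \<open>A simple directed graph on vertex set {0..<n}: a set of arcs (j,i) (arc from j to i),
  all within the vertex set, without self-arcs. Being a set, there are no repeated arcs.\<close>
definition simple_digraph :: "nat \<Rightarrow> (nat \<times> nat) set \<Rightarrow> bool" where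
  "simple_digraph n E \<longleftrightarrow> E \<subseteq> {0..<n} \<times> {0..<n} \<and> (\<forall>i. (i, i) \<notin> E)"

definition in_degree :: "(nat \<times> nat) set \<Rightarrow> nat \<Rightarrow> nat" where
  "in_degree E i = card {j. (j, i) \<in> E}"

definition laplacian :: "nat \<Rightarrow> (nat \<times> nat) set \<Rightarrow> complex mat" where
  "laplacian n E = mat n n (\<lambda>(i, j).
      (if i = j then of_nat (in_degree E i) else 0) - (if (j, i) \<in> E then 1 else 0))"

definition eigenvalues_mset :: "complex mat \<Rightarrow> complex multiset" where
  "eigenvalues_mset A = proots (char_poly A)"

text \<open>a(G): second smallest real part among the n eigenvalues counted with multiplicity.\<close>
definition alg_conn :: "nat \<Rightarrow> (nat \<times> nat) set \<Rightarrow> real" where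
  "alg_conn n E = sorted_list_of_multiset (image_mset Re (eigenvalues_mset (laplacian n E))) ! 1"

end

theory Submission imports Defs "Jordan_Normal_Form.Schur_Decomposition" begin

definition tr :: "nat \<Rightarrow> complex mat \<Rightarrow> complex" where
  "tr n M = (\<Sum>i<n. M $$ (i,i))"

lemma tr_comm:
  assumes X: "X \<in> carrier_mat n m" and Y: "Y \<in> carrier_mat m n"
  shows "tr n (X * Y) = tr m (Y * X)"
proof -
  have "tr n (X * Y) = (\<Sum>i<n. \<Sum>k<m. X $$ (i,k) * Y $$ (k,i))"
    using X Y by (auto simp: tr_def scalar_prod_def row_def col_def intro!: sum.cong sum.reindex_cong[of id] simp: atLeast0LessThan)
  also have "\<dots> = (\<Sum>k<m. \<Sum>i<n. Y $$ (k,i) * X $$ (i,k))"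
    by (subst sum.swap) (simp add: mult.commute)
  also have "\<dots> = tr m (Y * X)"
    using X Y by (auto simp: tr_def scalar_prod_def row_def col_def intro!: sum.cong simp: atLeast0LessThan)
  finally show ?thesis .
qed

lemma tr_similar:
  assumes "similar_mat_wit A B P Q" "A \<in> carrier_mat n n"
  shows "tr n A = tr n B"
proof -
  from assms have P: "P \<in> carrier_mat n n" and Q: "Q \<in> carrier_mat n n" and B: "B \<in> carrier_mat n n"
    and QP: "Q * P = 1\<^sub>m n" and AB: "A = P * B * Q"
    unfolding similar_mat_wit_def Let_def by auto
  have "tr n A = tr n (P * B * Q)" by (simp add: AB)
  also have "\<dots> = tr n (Q * (P * B))" using P B Q by (intro tr_comm) auto
  also have "Q * (P * B) = (Q * P) * B" using P B Q by (simp add: assoc_mult_mat)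
  also have "\<dots> = B" using QP B by simp
  finally show ?thesis .
qed

lemma tr_diag:
  assumes "B \<in> carrier_mat n n"
  shows "tr n B = sum_list (diag_mat B)"
  using assms unfolding tr_def diag_mat_def
  by (simp add: sum_list_sum_nth atLeast0LessThan)

lemma sorted_bound:
  fixes xs :: "real list"
  assumes "sorted xs" "length xs = n" "n \<ge> 2" "0 \<in> set xs" "sum_list xs = m" "m \<ge> 0"
  shows "xs ! 1 \<le> m / (real n - 1)"
proof (cases "xs ! 1 \<le> 0")
  case True
  have "m / (real n - 1) \<ge> 0" using assms by simp
  then show ?thesis using True by linarith
next
  case False
  from assms obtain a b ys where xs: "xs = a # b # ys"
    by (metis Suc_le_length_iff numeral_2_eq_2)
  have b: "b > 0" using False xs by simp
  have ys: "\<forall>y\<in>set ys. b \<le> y" using assms(1) xs by simp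
  have "a = 0" using assms(4) xs b ys assms(1) by auto
  have "sum_list ys \<ge> real (length ys) * b"
    using ys by (induction ys) (auto simp: algebra_simps)
  hence "m \<ge> (real n - 1) * b" using assms xs \<open>a = 0\<close> by (auto simp: algebra_simps)
  moreover have "real n - 1 > 0" using assms by simp
  ultimately show ?thesis using xs by (simp add: field_simps mult.commute)
qed

lemma card_E:
  assumes "simple_digraph n E"
  shows "card E = (\<Sum>i<n. in_degree E i)"
proof -
  have fin: "finite E" using assms unfolding simple_digraph_def
    by (meson finite_SigmaI finite_atLeastLessThan finite_subset)
  have E: "E = (\<Union>i<n. {e\<in>E. snd e = i})" using assms unfolding simple_digraph_def by auto
  have "card E = (\<Sum>i<n. card {e\<in>E. snd e = i})"
    by (subst E, rule card_UN_disjoint) (use fin in auto)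
  also have "\<dots> = (\<Sum>i<n. in_degree E i)"
  proof (rule sum.cong[OF refl])
    fix i
    have "{e\<in>E. snd e = i} = (\<lambda>j. (j,i)) ` {j. (j,i)\<in>E}" by force
    thus "card {e\<in>E. snd e = i} = in_degree E i"
      unfolding in_degree_def by (simp add: card_image inj_on_def)
  qed
  finally show ?thesis .
qed


theorem lemma2:
  fixes n :: nat and E :: "(nat \<times> nat) set"
  assumes "n \<ge> 2" and "simple_digraph n E"
  shows "alg_conn n E \<le> real (card E) / (real n - 1)"
proof -
  let ?L = "laplacian n E"
  have L: "?L \<in> carrier_mat n n" unfolding laplacian_def by simp
  obtain es where es: "char_poly ?L = (\<Prod>a\<leftarrow>es. [:- a, 1:])" and len: "length es = n"
    using char_poly_factorized[OF L] by blast
  have pr: "proots (\<Prod>a\<leftarrow>xs. [:- a, 1:]) = mset xs" for xs :: "complex list"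
  proof (induction xs)
    case (Cons a xs)
    have nz: "(\<Prod>a\<leftarrow>xs. [:- a, 1:]) \<noteq> (0::complex poly)" by (auto simp: prod_list_zero_iff)
    have "proots ([:-a,1:] * (\<Prod>a\<leftarrow>xs. [:- a, 1:])) = proots [:-a,1:] + proots (\<Prod>a\<leftarrow>xs. [:- a, 1:])"
      by (rule proots_mult) (use nz in auto)
    also have "\<dots> = mset (a # xs)" using Cons.IH by simp
    finally show ?case by (simp only: list.map prod_list.Cons)
  qed simp
  have ev: "eigenvalues_mset ?L = mset es"
    unfolding eigenvalues_mset_def es by (rule pr)
  obtain B P Q where sd: "schur_decomposition ?L es = (B,P,Q)"
    by (cases "schur_decomposition ?L es") auto
  from schur_decomposition[OF L es sd]
  have sim: "similar_mat_wit ?L B P Q" and dg: "diag_mat B = es" by auto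
  have B: "B \<in> carrier_mat n n" using sim L unfolding similar_mat_wit_def Let_def by auto
  have "sum_list es = tr n ?L"
    using tr_similar[OF sim L] tr_diag[OF B] dg by simp
  also have "tr n ?L = of_nat (\<Sum>i<n. in_degree E i)"
    unfolding tr_def laplacian_def using assms(2) unfolding simple_digraph_def by simp
  also have "\<dots> = of_nat (card E)" using card_E[OF assms(2)] by simp
  finally have sumes: "sum_list es = of_nat (card E)" .
  have "eigenvector ?L (vec n (\<lambda>_. 1)) 0"
  proof -
    have "?L *\<^sub>v vec n (\<lambda>_. 1) = 0 \<cdot>\<^sub>v vec n (\<lambda>_. 1)"
    proof (rule eq_vecI)
      fix i assume i: "i < dim_vec (0 \<cdot>\<^sub>v vec n (\<lambda>_. (1::complex)))"
      hence i: "i < n" by simp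
      have "(?L *\<^sub>v vec n (\<lambda>_. 1)) $ i = (\<Sum>j<n. ?L $$ (i,j))"
        using i L by (simp add: scalar_prod_def row_def atLeast0LessThan)
      also have "\<dots> = (\<Sum>j<n. (if i = j then of_nat (in_degree E i) else 0)) - (\<Sum>j<n. (if (j, i) \<in> E then 1 else 0))"
        using i unfolding laplacian_def by (simp add: sum_subtractf)
      also have "(\<Sum>j<n. (if i = j then of_nat (in_degree E i) else 0)) = (of_nat (in_degree E i) :: complex)"
        using i by simp
      also have "(\<Sum>j<n. (if (j, i) \<in> E then 1 else 0)) = (of_nat (card {j\<in>{..<n}. (j, i) \<in> E}) :: complex)"
        by (simp add: sum.If_cases Int_def conj_commute)
      also have "{j\<in>{..<n}. (j, i) \<in> E} = {j. (j, i) \<in> E}"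
        using assms(2) unfolding simple_digraph_def by auto
      also have "of_nat (in_degree E i) - of_nat (card {j. (j, i) \<in> E}) = (0::complex)"
        unfolding in_degree_def by simp
      finally show "(?L *\<^sub>v vec n (\<lambda>_. 1)) $ i = (0 \<cdot>\<^sub>v vec n (\<lambda>_. 1)) $ i" using i by simp
    qed (use L in simp)
    moreover have "vec n (\<lambda>_. (1::complex)) \<noteq> 0\<^sub>v n"
    proof
      assume "vec n (\<lambda>_. (1::complex)) = 0\<^sub>v n"
      hence "vec n (\<lambda>_. (1::complex)) $ 0 = 0\<^sub>v n $ 0" by simp
      thus False using assms(1) by simp
    qed
    ultimately show ?thesis unfolding eigenvector_def using L by simp
  qed
  hence "poly (char_poly ?L) 0 = 0"
    using eigenvalue_root_char_poly[OF L] unfolding eigenvalue_def by blast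
  hence "0 \<in> set es" unfolding es by (simp add: poly_prod_list_zero_iff) 
  let ?xs = "sorted_list_of_multiset (image_mset Re (mset es))"
  have "alg_conn n E = ?xs ! 1" unfolding alg_conn_def ev ..
  also have "\<dots> \<le> real (card E) / (real n - 1)"
  proof (rule sorted_bound[where n = n])
    show "sorted ?xs" by simp
    show "length ?xs = n" using len by (metis mset_sorted_list_of_multiset size_mset size_image_mset)
    show "0 \<in> set ?xs" using \<open>0 \<in> set es\<close> by force
    have "sum_list ?xs = sum_mset (image_mset Re (mset es))"
      by (metis mset_sorted_list_of_multiset sum_mset_sum_list)
    also have "\<dots> = Re (sum_list es)"
      by (induction es) auto
    finally show "sum_list ?xs = real (card E)" using sumes by simp
  qed (use assms in auto)
  finally show ?thesis .
qed

end
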